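(* Fix $x\in\mathbf{X}$ and temperatures $\tau_1,\dots,\tau_T>0$. (i) Suppose $H_{TP}(x)\le\delta$, and define OOD detectors by $\mathbf{P}'_k(x\in\mathbf{X}_k\mid D)=\mathbf{P}(x\in\mathbf{X}_k\mid D)^{1/\tau_k}$. Then for all $k=1,\dots,T$, $H_{OOD,k}(x)\le\max\big(\delta/\tau_k,\ -\log(1-(1-e^{-\delta})^{1/\tau_k})\big)$. (ii) Suppose OOD detectors satisfy $H_{OOD,k}(x)\le\delta_k$ for $k=1,\dots,T$, and define $\mathbf{P}(x\in\mathbf{X}_k\mid D)=\frac{\mathbf{P}'_k(x\in\mathbf{X}_k\mid D)^{1/\tau_k}}{\sum_j\mathbf{P}'_j(x\in\mathbf{X}_j\mid D)^{1/\tau_j}}$. Then $$H_{TP}(x)\le\sum_k\frac{\mathbf{1}_{x\in\mathbf{X}_k}\delta_k}{\tau_k}+\frac{\sum_k(1-e^{-\delta_k})^{1/\tau_k}}{\sum_k\mathbf{1}_{x\in\mathbf{X}_k}\big(1-(1-e^{-\delta_k})^{1/\tau_k}\big)},$$ where $\mathbf{1}_{x\in\mathbf{X}_k}$ is the indicator of $x\in\mathbf{X}_k$.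
   Context: $\mathbf{X}$ is an input domain which is the disjoint union of task domains $\mathbf{X}_1,\dots,\mathbf{X}_T$. $D$ is a fixed conditioning event. A task-id prediction (TP) is a categorical distribution $\{\mathbf{P}(x\in\mathbf{X}_k\mid D)\}_{k=1}^T$ over the tasks (nonnegative, summing to $1$); for $x\in\mathbf{X}_{k_0}$, $H_{TP}(x)=-\log\mathbf{P}(x\in\mathbf{X}_{k_0}\mid D)$. An OOD detector for task $k$ is a value $\mathbf{P}'_k(x\in\mathbf{X}_k\mid D)\in[0,1]$ with $\mathbf{P}'_k(x\notin\mathbf{X}_k\mid D)=1-\mathbf{P}'_k(x\in\mathbf{X}_k\mid D)$, and $H_{OOD,k}(x)=-\log\mathbf{P}'_k(x\in\mathbf{X}_k\mid D)$ if $x\in\mathbf{X}_k$, $H_{OOD,k}(x)=-\log\mathbf{P}'_k(x\notin\mathbf{X}_k\mid D)$ if $x\in\mathbf{X}\setminus\mathbf{X}_k$. *)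

theory Defs
  imports "HOL-Analysis.Analysis"
begin

definition nlog :: "real \<Rightarrow> ereal" where
  "nlog p = (if p \<le> 0 then \<infinity> else ereal (- ln p))"

definition is_TP :: "nat \<Rightarrow> (nat \<Rightarrow> real) \<Rightarrow> bool" where
  "is_TP T p \<longleftrightarrow> (\<forall>k\<in>{1..T}. 0 \<le> p k) \<and> (\<Sum>k=1..T. p k) = 1"

text \<open>H_TP(x) = -log P(x in X_k0 | D), where k0 is the (unique) task containing x.\<close>
definition H_TP :: "(nat \<Rightarrow> 'a set) \<Rightarrow> nat \<Rightarrow> (nat \<Rightarrow> real) \<Rightarrow> 'a \<Rightarrow> ereal" where
  "H_TP X T p x = nlog (p (THE k. k \<in> {1..T} \<and> x \<in> X k))"

text \<open>H_OOD,k(x) for the OOD detector of task k with value q = P'_k(x in X_k | D).\<close>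
definition H_OOD :: "(nat \<Rightarrow> 'a set) \<Rightarrow> nat \<Rightarrow> real \<Rightarrow> 'a \<Rightarrow> ereal" where
  "H_OOD X k q x = (if x \<in> X k then nlog q else nlog (1 - q))"

end

theory Submission
  imports Defs
begin

lemma nlog_anti: "a \<le> b \<Longrightarrow> nlog b \<le> nlog a"
  unfolding nlog_def by auto

lemma nlog_le_pos: "nlog p \<le> ereal d \<Longrightarrow> p > 0 \<and> - ln p \<le> d"
  unfolding nlog_def by (auto split: if_splits)

lemma nlog_pos: "p > 0 \<Longrightarrow> nlog p = ereal (- ln p)"
  unfolding nlog_def by auto

theorem theorem5:
  fixes X :: "nat \<Rightarrow> 'a set" and T :: nat and x :: 'a and \<tau> :: "nat \<Rightarrow> real"
  assumes disj: "disjoint_family_on X {1..T}"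
    and xin: "x \<in> (\<Union>k\<in>{1..T}. X k)"
    and tau_pos: "\<forall>k\<in>{1..T}. \<tau> k > 0"
  shows
    "(\<forall>(p :: nat \<Rightarrow> real) (\<delta> :: real).
        is_TP T p \<and> H_TP X T p x \<le> ereal \<delta> \<longrightarrow>
        (\<forall>k\<in>{1..T}. H_OOD X k (p k powr (1 / \<tau> k)) x
             \<le> max (ereal (\<delta> / \<tau> k)) (nlog (1 - (1 - exp (- \<delta>)) powr (1 / \<tau> k)))))
     \<and>
     (\<forall>(q :: nat \<Rightarrow> real) (\<delta> :: nat \<Rightarrow> real).
        (\<forall>k\<in>{1..T}. 0 \<le> q k \<and> q k \<le> 1) \<and>
        (\<forall>k\<in>{1..T}. H_OOD X k (q k) x \<le> ereal (\<delta> k)) \<longrightarrow>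
        H_TP X T (\<lambda>k. q k powr (1 / \<tau> k) / (\<Sum>j=1..T. q j powr (1 / \<tau> j))) x
          \<le> ereal ((\<Sum>k=1..T. indicator (X k) x * \<delta> k / \<tau> k)
               + (\<Sum>k=1..T. (1 - exp (- \<delta> k)) powr (1 / \<tau> k))
                 / (\<Sum>k=1..T. indicator (X k) x * (1 - (1 - exp (- \<delta> k)) powr (1 / \<tau> k)))))"
proof -
  obtain k0 where k0: "k0 \<in> {1..T}" "x \<in> X k0" using xin by blast
  have uniq: "\<And>k. k \<in> {1..T} \<Longrightarrow> x \<in> X k \<longleftrightarrow> k = k0"
    using disj k0 unfolding disjoint_family_on_def by blast
  have THE: "(THE k. k \<in> {1..T} \<and> x \<in> X k) = k0"
    by (rule the_equality) (use k0 uniq in auto)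
  have HTP: "\<And>p. H_TP X T p x = nlog (p k0)" unfolding H_TP_def THE by simp
  have indsum: "\<And>f. (\<Sum>k=1..T. indicator (X k) x * f k) = (f k0 :: real)"
  proof -
    fix f :: "nat \<Rightarrow> real"
    have "(\<Sum>k=1..T. indicator (X k) x * f k) = (\<Sum>k=1..T. if k = k0 then f k0 else 0)"
      by (rule sum.cong) (auto simp: indicator_def uniq)
    also have "\<dots> = f k0" using k0(1) by simp
    finally show "(\<Sum>k=1..T. indicator (X k) x * f k) = f k0" .
  qed
  have fin: "finite {1..T}" by simp
  have P1: "\<forall>(p :: nat \<Rightarrow> real) (\<delta> :: real).
        is_TP T p \<and> H_TP X T p x \<le> ereal \<delta> \<longrightarrow>
        (\<forall>k\<in>{1..T}. H_OOD X k (p k powr (1 / \<tau> k)) x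
             \<le> max (ereal (\<delta> / \<tau> k)) (nlog (1 - (1 - exp (- \<delta>)) powr (1 / \<tau> k))))"
  proof (intro allI impI ballI)
    fix p :: "nat \<Rightarrow> real" and \<delta> :: real and k
    assume A: "is_TP T p \<and> H_TP X T p x \<le> ereal \<delta>" and k: "k \<in> {1..T}"
    have nn: "\<forall>k\<in>{1..T}. 0 \<le> p k" and s1: "(\<Sum>k=1..T. p k) = 1" using A unfolding is_TP_def by auto
    have "nlog (p k0) \<le> ereal \<delta>" using A HTP by simp
    hence pk0: "p k0 > 0" "- ln (p k0) \<le> \<delta>" using nlog_le_pos by blast+
    have tk: "\<tau> k > 0" using tau_pos k by auto
    show "H_OOD X k (p k powr (1 / \<tau> k)) x
             \<le> max (ereal (\<delta> / \<tau> k)) (nlog (1 - (1 - exp (- \<delta>)) powr (1 / \<tau> k)))"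
    proof (cases "k = k0")
      case True
      have "H_OOD X k (p k powr (1 / \<tau> k)) x = ereal (- ln (p k0) / \<tau> k)"
        using True k0 pk0 unfolding H_OOD_def by (simp add: nlog_pos ln_powr)
      also have "\<dots> \<le> ereal (\<delta> / \<tau> k)" using divide_right_mono[OF pk0(2), of "\<tau> k"] tk by simp
      finally show ?thesis by (simp add: le_max_iff_disj)
    next
      case False
      have xn: "x \<notin> X k" using uniq[OF k] False by simp
      have "p k + p k0 = (\<Sum>j\<in>{k,k0}. p j)" using False by simp
      also have "\<dots> \<le> (\<Sum>j=1..T. p j)" by (rule sum_mono2) (use k k0 nn in auto)
      finally have "p k \<le> 1 - p k0" using s1 by simp
      moreover have "exp (- \<delta>) \<le> p k0"
        using pk0 by (metis exp_le_cancel_iff exp_ln minus_le_iff)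
      ultimately have "p k \<le> 1 - exp (- \<delta>)" by simp
      hence "p k powr (1 / \<tau> k) \<le> (1 - exp (- \<delta>)) powr (1 / \<tau> k)"
        using nn k tk by (intro powr_mono2) auto
      hence "nlog (1 - p k powr (1 / \<tau> k)) \<le> nlog (1 - (1 - exp (- \<delta>)) powr (1 / \<tau> k))"
        by (intro nlog_anti) simp
      thus ?thesis using xn unfolding H_OOD_def by (simp add: le_max_iff_disj)
    qed
  qed
  have P2: "\<forall>(q :: nat \<Rightarrow> real) (\<delta> :: nat \<Rightarrow> real).
        (\<forall>k\<in>{1..T}. 0 \<le> q k \<and> q k \<le> 1) \<and>
        (\<forall>k\<in>{1..T}. H_OOD X k (q k) x \<le> ereal (\<delta> k)) \<longrightarrow>
        H_TP X T (\<lambda>k. q k powr (1 / \<tau> k) / (\<Sum>j=1..T. q j powr (1 / \<tau> j))) x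
          \<le> ereal ((\<Sum>k=1..T. indicator (X k) x * \<delta> k / \<tau> k)
               + (\<Sum>k=1..T. (1 - exp (- \<delta> k)) powr (1 / \<tau> k))
                 / (\<Sum>k=1..T. indicator (X k) x * (1 - (1 - exp (- \<delta> k)) powr (1 / \<tau> k))))"
  proof (intro allI impI)
    fix q :: "nat \<Rightarrow> real" and \<delta> :: "nat \<Rightarrow> real"
    assume A: "(\<forall>k\<in>{1..T}. 0 \<le> q k \<and> q k \<le> 1) \<and> (\<forall>k\<in>{1..T}. H_OOD X k (q k) x \<le> ereal (\<delta> k))"
    define a where "a = (\<lambda>k. q k powr (1 / \<tau> k))"
    define c where "c = (\<lambda>k. (1 - exp (- \<delta> k)) powr (1 / \<tau> k))"
    define S where "S = (\<Sum>j=1..T. a j)"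
    define R where "R = (\<Sum>j\<in>{1..T}-{k0}. a j)"
    define C where "C = (\<Sum>j=1..T. c j)"
    have c0: "\<And>j. c j \<ge> 0" unfolding c_def by simp
    have a0: "\<And>j. a j \<ge> 0" unfolding a_def by simp
    have "H_OOD X k0 (q k0) x \<le> ereal (\<delta> k0)" using A k0(1) by blast
    hence "nlog (q k0) \<le> ereal (\<delta> k0)" using k0(2) unfolding H_OOD_def by simp
    hence qk0: "q k0 > 0" "- ln (q k0) \<le> \<delta> k0" using nlog_le_pos by blast+
    have t0: "\<tau> k0 > 0" using tau_pos k0 by auto
    have q1: "q k0 \<le> 1" using A k0 by auto
    have ak0: "a k0 > 0" unfolding a_def using qk0 by simp
    have "a k0 \<le> 1 powr (1 / \<tau> k0)" unfolding a_def using q1 qk0 t0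
      by (intro powr_mono2) auto
    hence ak1: "a k0 \<le> 1" by simp
    have lna: "- ln (a k0) \<le> \<delta> k0 / \<tau> k0"
      unfolding a_def using qk0 t0 divide_right_mono[OF qk0(2), of "\<tau> k0"] by (simp add: ln_powr)
    have "ln (q k0) \<le> 0" using qk0 q1 by simp
    hence d0: "\<delta> k0 \<ge> 0" using qk0 by linarith
    have aj: "a j \<le> c j" if j: "j \<in> {1..T}-{k0}" for j
    proof -
      have xn: "x \<notin> X j" using uniq j by auto
      have "H_OOD X j (q j) x \<le> ereal (\<delta> j)" using A j by blast
      hence "nlog (1 - q j) \<le> ereal (\<delta> j)" using xn unfolding H_OOD_def by simp
      hence h: "1 - q j > 0" "- ln (1 - q j) \<le> \<delta> j" using nlog_le_pos by blast+
      have "exp (- \<delta> j) \<le> 1 - q j"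
        using h by (metis exp_le_cancel_iff exp_ln minus_le_iff)
      hence "q j \<le> 1 - exp (- \<delta> j)" by simp
      moreover have "\<tau> j > 0" using tau_pos j by blast
      ultimately show ?thesis unfolding a_def c_def using A j by (intro powr_mono2) auto
    qed
    have SR: "S = a k0 + R" unfolding S_def R_def using k0 by (simp add: sum.remove)
    have "R \<le> (\<Sum>j\<in>{1..T}-{k0}. c j)" unfolding R_def using aj by (intro sum_mono) auto
    also have "\<dots> \<le> C" unfolding C_def using c0 by (intro sum_mono2) auto
    finally have RC: "R \<le> C" .
    have R0: "R \<ge> 0" unfolding R_def using a0 by (simp add: sum_nonneg)
    have Spos: "S > 0" using SR ak0 R0 by simp
    have lnS: "ln S \<le> R" using ln_le_minus_one[OF Spos] SR ak1 by simp
    have ck1: "c k0 < 1"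
    proof -
      have "1 - exp (- \<delta> k0) < 1" by simp
      moreover have "0 \<le> 1 - exp (- \<delta> k0)" using d0 by simp
      ultimately have "c k0 < 1 powr (1 / \<tau> k0)" unfolding c_def using t0
        by (intro powr_less_mono2) auto
      thus ?thesis by simp
    qed
    define D where "D = 1 - c k0"
    have Dp: "D > 0" "D \<le> 1" unfolding D_def using ck1 c0 by auto
    have C0: "C \<ge> 0" unfolding C_def using c0 by (simp add: sum_nonneg)
    have "C * D \<le> C" using Dp C0 by (intro mult_left_le) auto
    hence CD: "C \<le> C / D" using Dp by (simp add: le_divide_eq)
    have "H_TP X T (\<lambda>k. q k powr (1 / \<tau> k) / (\<Sum>j=1..T. q j powr (1 / \<tau> j))) x
        = nlog (a k0 / S)" unfolding HTP a_def S_def by simp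
    also have "\<dots> = ereal (ln S - ln (a k0))" using ak0 Spos by (simp add: nlog_pos ln_div)
    also have "\<dots> \<le> ereal (\<delta> k0 / \<tau> k0 + C / D)" using lna lnS RC CD by simp
    finally have main: "H_TP X T (\<lambda>k. q k powr (1 / \<tau> k) / (\<Sum>j=1..T. q j powr (1 / \<tau> j))) x
        \<le> ereal (\<delta> k0 / \<tau> k0 + C / D)" .
    show "H_TP X T (\<lambda>k. q k powr (1 / \<tau> k) / (\<Sum>j=1..T. q j powr (1 / \<tau> j))) x
          \<le> ereal ((\<Sum>k=1..T. indicator (X k) x * \<delta> k / \<tau> k)
               + (\<Sum>k=1..T. (1 - exp (- \<delta> k)) powr (1 / \<tau> k))
                 / (\<Sum>k=1..T. indicator (X k) x * (1 - (1 - exp (- \<delta> k)) powr (1 / \<tau> k))))"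
    proof -
      have e1: "(\<Sum>k=1..T. indicator (X k) x * \<delta> k / \<tau> k) = \<delta> k0 / \<tau> k0"
        using indsum[of "\<lambda>k. \<delta> k / \<tau> k"] by simp
      have e2: "(\<Sum>k=1..T. indicator (X k) x * (1 - (1 - exp (- \<delta> k)) powr (1 / \<tau> k))) = D"
        using indsum[of "\<lambda>k. 1 - c k"] unfolding D_def c_def by simp
      have e3: "(\<Sum>k=1..T. (1 - exp (- \<delta> k)) powr (1 / \<tau> k)) = C"
        unfolding C_def c_def by simp
      show ?thesis using main unfolding e1 e2 e3 .
    qed
  qed
  show ?thesis using P1 P2 by blast
qed

end
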